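(* Let $f(x)=\frac1n\sum_{i=1}^n f_i(x)$ on $\mathbb{R}^d$, where each $f_i$ is convex and $L_i$-smooth (i.e. $\nabla f_i$ is $L_i$-Lipschitz) and lower bounded, and let $x^*$ be a minimizer of $f$. Consider SGD with the DecSPS stepsize (defined in the context) with a non-decreasing sequence $(c_k)_{k\ge0}$ satisfying $c_k\ge 1$ for all $k\in\mathbb{N}$. Then for every $K\ge1$, $$\mathbb{E}[f(\bar x^K)-f(x^* )]\le \frac{2c_{K-1}\tilde L D^2}{K}+\frac1K\sum_{k=0}^{K-1}\frac{\hat\sigma_B^2}{c_k},$$ where $D^2:=\max_{k\in[K-1]}\|x^k-x^*\|^2$, $\tilde L:=\max\{\max_i L_i,\ \frac{1}{2c_0\gamma_b}\}$, and $\bar x^K=\frac1K\sum_{k=0}^{K-1}x^k$.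
   Context: Minibatches: fix a batch size $B$; at each iteration $k$ a subset $\mathcal{S}_k\subseteq[n]$ with $|\mathcal{S}_k|=B$ is sampled uniformly at random, independently across iterations. For $\mathcal S\subseteq[n]$, $f_{\mathcal S}:=\frac1{|\mathcal S|}\sum_{i\in\mathcal S}f_i$, $f^*_{\mathcal S}:=\inf_x f_{\mathcal S}(x)$, and $\ell^*_{\mathcal S}$ is a given real number with $\ell^*_{\mathcal S}\le f^*_{\mathcal S}$. SGD: $x^{k+1}=x^k-\gamma_k\nabla f_{\mathcal S_k}(x^k)$ from a given $x^0$. DecSPS stepsize: $\gamma_k:=\frac{1}{c_k}\min\left\{\frac{f_{\mathcal S_k}(x^k)-\ell^*_{\mathcal S_k}}{\|\nabla f_{\mathcal S_k}(x^k)\|^2},\ c_{k-1}\gamma_{k-1}\right\}$ for $k\ge0$, with conventions $c_{-1}=c_0$ and $\gamma_{-1}=\gamma_b>0$ (a fixed constant); if $\nabla f_{\mathcal S_k}(x^k)=0$ the iterate is not updated. $\hat\sigma_B^2:=\mathbb{E}_{\mathcal S}[f_{\mathcal S}(x^* )-\ell^*_{\mathcal S}]=f(x^* )-\mathbb{E}_{\mathcal S}[\ell^*_{\mathcal S}]$, where $\mathcal S$ is uniform over subsets of size $B$. $[K-1]$ denotes the iteration indices $\{0,\dots,K-1\}$. *)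

theory Defs
  imports "HOL-Analysis.Analysis" "HOL-Probability.Probability"
begin

text \<open>Component functions are indexed by 0,...,n-1.\<close>

definition avg_fun :: "nat \<Rightarrow> (nat \<Rightarrow> 'a \<Rightarrow> real) \<Rightarrow> 'a \<Rightarrow> real" where
  "avg_fun n f x = (1 / real n) * (\<Sum>i<n. f i x)"

definition batch_fun :: "(nat \<Rightarrow> 'a \<Rightarrow> real) \<Rightarrow> nat set \<Rightarrow> 'a \<Rightarrow> real" where
  "batch_fun f S x = (1 / real (card S)) * (\<Sum>i\<in>S. f i x)"

definition batch_grad :: "(nat \<Rightarrow> 'a \<Rightarrow> 'a::real_vector) \<Rightarrow> nat set \<Rightarrow> 'a \<Rightarrow> 'a" where
  "batch_grad g S x = (1 / real (card S)) *\<^sub>R (\<Sum>i\<in>S. g i x)"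

definition batches :: "nat \<Rightarrow> nat \<Rightarrow> nat set set" where
  "batches n B = {S. S \<subseteq> {..<n} \<and> card S = B}"

text \<open>State after k steps: (x^k, gamma_{k-1}), with gamma_{-1} = gamma_b.
  The DecSPS stepsize at step k uses c_k and c_{k-1} (with c_{-1} = c_0, which is
  exactly c (k - 1) for natural subtraction). If the minibatch gradient is zero the
  iterate is not updated, and the stepsize is c_{k-1} gamma_{k-1} / c_k (the Polyak
  term being read as +infinity).\<close>
primrec sgd_decsps ::
  "(nat \<Rightarrow> 'a \<Rightarrow> real) \<Rightarrow> (nat \<Rightarrow> 'a \<Rightarrow> 'a::real_inner) \<Rightarrow> (nat set \<Rightarrow> real)
   \<Rightarrow> (nat \<Rightarrow> real) \<Rightarrow> real \<Rightarrow> 'a \<Rightarrow> (nat \<Rightarrow> nat set) \<Rightarrow> nat \<Rightarrow> 'a \<times> real" where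
  "sgd_decsps f g lstar c gb x0 S 0 = (x0, gb)"
| "sgd_decsps f g lstar c gb x0 S (Suc k) =
     (let (x, gp) = sgd_decsps f g lstar c gb x0 S k;
          v = batch_grad g (S k) x;
          gam = (if v = 0 then c (k - 1) * gp / c k
                 else (1 / c k) * min ((batch_fun f (S k) x - lstar (S k)) / (norm v)\<^sup>2)
                                      (c (k - 1) * gp))
      in (if v = 0 then x else x - gam *\<^sub>R v, gam))"

end

theory Submission
  imports Defs
begin


lemma convex_grad_ineq:
  fixes \<phi> :: "'a::real_inner \<Rightarrow> real"
  assumes cv: "convex_on UNIV \<phi>" and d: "(\<phi> has_derivative (\<lambda>h. g \<bullet> h)) (at x)"
  shows "\<phi> x + g \<bullet> (y - x) \<le> \<phi> y"
proof -
  define \<psi> where "\<psi> t = \<phi> (x + t *\<^sub>R (y - x))" for t :: real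
  have "convex_on UNIV \<psi>"
  proof (rule convex_onI)
    fix t :: real and a b
    assume t: "0 < t" "t < 1"
    have "x + ((1 - t) * a + t * b) *\<^sub>R (y - x) = (1 - t) *\<^sub>R (x + a *\<^sub>R (y - x)) + t *\<^sub>R (x + b *\<^sub>R (y - x))"
      by (simp add: algebra_simps)
    then show "\<psi> ((1 - t) *\<^sub>R a + t *\<^sub>R b) \<le> (1 - t) * \<psi> a + t * \<psi> b"
      unfolding \<psi>_def using t cv by (simp add: convex_on_def)
  qed simp
  moreover have "(\<psi> has_field_derivative (g \<bullet> (y - x))) (at 0 within UNIV)"
  proof -
    have "((\<lambda>t. x + t *\<^sub>R (y - x)) has_derivative (\<lambda>t. t *\<^sub>R (y - x))) (at 0)"
      by (auto intro!: derivative_eq_intros)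
    moreover have "(\<phi> has_derivative (\<lambda>h. g \<bullet> h)) (at (x + 0 *\<^sub>R (y - x)))" using d by simp
    ultimately have "(\<psi> has_derivative (\<lambda>t. g \<bullet> (t *\<^sub>R (y - x)))) (at 0)"
      unfolding \<psi>_def using has_derivative_compose[of "\<lambda>t. x + t *\<^sub>R (y - x)"] by blast
    moreover have "(\<lambda>t. t * (g \<bullet> (y - x))) = (*) (g \<bullet> (y - x))" by (auto simp: fun_eq_iff)
    ultimately show ?thesis by (simp add: has_field_derivative_def)
  qed
  ultimately have "\<psi> 1 - \<psi> 0 \<ge> (g \<bullet> (y - x)) * (1 - 0)"
    by (intro convex_on_imp_above_tangent[where A=UNIV]) auto
  then show ?thesis unfolding \<psi>_def by simp
qed

lemma descent_ineq:
  fixes \<phi> :: "'a::real_inner \<Rightarrow> real"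
  assumes d: "\<And>z. (\<phi> has_derivative (\<lambda>h. g z \<bullet> h)) (at z)"
    and lip: "\<And>u v. norm (g u - g v) \<le> L * norm (u - v)"
  shows "\<phi> y \<le> \<phi> x + g x \<bullet> (y - x) + L / 2 * (norm (y - x))\<^sup>2"
proof -
  define h where "h = y - x"
  define \<psi> where "\<psi> t = \<phi> (x + t *\<^sub>R h) - t * (g x \<bullet> h) - L / 2 * t\<^sup>2 * (norm h)\<^sup>2" for t :: real
  have "\<psi> 1 \<le> \<psi> 0"
  proof (rule DERIV_nonpos_imp_nonincreasing[of 0 1])
    fix t :: real assume t: "0 \<le> t" "t \<le> 1"
    have d1: "((\<lambda>t. \<phi> (x + t *\<^sub>R h)) has_derivative (\<lambda>s. g (x + t *\<^sub>R h) \<bullet> (s *\<^sub>R h))) (at t)"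
    proof -
      have "((\<lambda>t. x + t *\<^sub>R h) has_derivative (\<lambda>s. s *\<^sub>R h)) (at t)"
        by (auto intro!: derivative_eq_intros)
      then show ?thesis using has_derivative_compose[OF _ d] by blast
    qed
    have d1': "((\<lambda>t. \<phi> (x + t *\<^sub>R h)) has_real_derivative (g (x + t *\<^sub>R h) \<bullet> h)) (at t)"
    proof -
      have "(\<lambda>s. g (x + t *\<^sub>R h) \<bullet> (s *\<^sub>R h)) = (*) (g (x + t *\<^sub>R h) \<bullet> h)" by (auto simp: fun_eq_iff)
      then show ?thesis using d1 by (simp add: has_field_derivative_def)
    qed
    have "(\<psi> has_real_derivative (g (x + t *\<^sub>R h) \<bullet> h - g x \<bullet> h - L * t * (norm h)\<^sup>2)) (at t)"
    proof -
      have a: "((\<lambda>t. t * (g x \<bullet> h)) has_real_derivative (g x \<bullet> h)) (at t)"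
        by (auto intro!: derivative_eq_intros)
      have b: "((\<lambda>t. L / 2 * t\<^sup>2 * (norm h)\<^sup>2) has_real_derivative (L * t * (norm h)\<^sup>2)) (at t)"
        by (rule derivative_eq_intros refl | simp)+
      have e: "\<psi> = (\<lambda>t. \<phi> (x + t *\<^sub>R h) - t * (g x \<bullet> h) - L / 2 * t\<^sup>2 * (norm h)\<^sup>2)"
        by (simp add: fun_eq_iff \<psi>_def)
      show ?thesis unfolding e by (rule DERIV_diff[OF DERIV_diff[OF d1' a] b])
    qed
    moreover have "g (x + t *\<^sub>R h) \<bullet> h - g x \<bullet> h - L * t * (norm h)\<^sup>2 \<le> 0"
    proof -
      have "g (x + t *\<^sub>R h) \<bullet> h - g x \<bullet> h = (g (x + t *\<^sub>R h) - g x) \<bullet> h" by (simp add: inner_diff_left)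
      also have "\<dots> \<le> norm (g (x + t *\<^sub>R h) - g x) * norm h" by (rule norm_cauchy_schwarz)
      also have "\<dots> \<le> (L * norm (t *\<^sub>R h)) * norm h"
        using lip[of "x + t *\<^sub>R h" x] by (intro mult_right_mono) auto
      also have "\<dots> = L * t * (norm h)\<^sup>2" using t by (simp add: power2_eq_square)
      finally show ?thesis by simp
    qed
    ultimately show "\<exists>y. DERIV \<psi> t :> y \<and> y \<le> 0" by blast
  qed simp
  then show ?thesis unfolding \<psi>_def h_def by (simp add: algebra_simps)
qed



lemma exp_swap:
  fixes G :: "'a \<Rightarrow> 'b \<Rightarrow> real"
  assumes A: "finite (set_pmf A)" and B: "finite (set_pmf B)"
  shows "measure_pmf.expectation A (\<lambda>a. measure_pmf.expectation B (\<lambda>b. G a b))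
       = measure_pmf.expectation B (\<lambda>b. measure_pmf.expectation A (\<lambda>a. G a b))"
proof -
  have "measure_pmf.expectation A (\<lambda>a. measure_pmf.expectation B (\<lambda>b. G a b))
      = (\<Sum>a\<in>set_pmf A. pmf A a * (\<Sum>b\<in>set_pmf B. pmf B b * G a b))"
    using A B by (simp add: integral_measure_pmf[OF A] integral_measure_pmf[OF B])
  also have "\<dots> = (\<Sum>b\<in>set_pmf B. pmf B b * (\<Sum>a\<in>set_pmf A. pmf A a * G a b))"
    by (simp add: sum_distrib_left mult.left_commute sum.swap[of _ "set_pmf A"])
  also have "\<dots> = measure_pmf.expectation B (\<lambda>b. measure_pmf.expectation A (\<lambda>a. G a b))"
    using A B by (simp add: integral_measure_pmf[OF A] integral_measure_pmf[OF B])
  finally show ?thesis .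
qed

lemma exp_pair:
  fixes G :: "'a \<times> 'b \<Rightarrow> real"
  assumes A: "finite (set_pmf A)" and B: "finite (set_pmf B)"
  shows "measure_pmf.expectation (pair_pmf A B) G
       = measure_pmf.expectation A (\<lambda>a. measure_pmf.expectation B (\<lambda>b. G (a, b)))"
proof -
  have AB: "finite (set_pmf A \<times> set_pmf B)" using A B by simp
  have "measure_pmf.expectation (pair_pmf A B) G = (\<Sum>p\<in>set_pmf A \<times> set_pmf B. pmf (pair_pmf A B) p * G p)"
    by (subst integral_measure_pmf[OF AB]) auto
  also have "\<dots> = (\<Sum>a\<in>set_pmf A. \<Sum>b\<in>set_pmf B. pmf A a * pmf B b * G (a, b))"
    apply (simp add: sum.cartesian_product)
    apply (rule sum.cong)
    apply (auto simp: pmf_pair)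
    done
  also have "\<dots> = (\<Sum>a\<in>set_pmf A. pmf A a * (\<Sum>b\<in>set_pmf B. pmf B b * G (a, b)))"
    by (simp add: sum_distrib_left mult.assoc)
  also have "\<dots> = measure_pmf.expectation A (\<lambda>a. measure_pmf.expectation B (\<lambda>b. G (a, b)))"
    using A B by (simp add: integral_measure_pmf[OF A] integral_measure_pmf[OF B])
  finally show ?thesis .
qed

lemma indep_step:
  fixes X :: "(nat \<Rightarrow> 'b) \<Rightarrow> 'c" and H :: "'c \<Rightarrow> 'b \<Rightarrow> real"
  assumes k: "k < K" and U: "finite (set_pmf U)" and Xdep: "\<And>S y. X (S(k:=y)) = X S"
  shows "measure_pmf.expectation (Pi_pmf {..<K} d (\<lambda>_. U)) (\<lambda>S. H (X S) (S k))
       = measure_pmf.expectation (Pi_pmf {..<K} d (\<lambda>_. U)) (\<lambda>S. measure_pmf.expectation U (\<lambda>T. H (X S) T))"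
proof -
  define Q where "Q = Pi_pmf ({..<K} - {k}) d (\<lambda>_. U)"
  have KK: "{..<K} = insert k ({..<K} - {k})" using k by auto
  have M: "Pi_pmf {..<K} d (\<lambda>_. U) = map_pmf (\<lambda>(y,f). f(k:=y)) (pair_pmf U Q)"
    unfolding Q_def by (subst KK, subst Pi_pmf_insert) auto
  have Qf: "finite (set_pmf Q)" unfolding Q_def using U by (subst set_Pi_pmf) (auto intro!: finite_PiE_dflt)
  have "measure_pmf.expectation (Pi_pmf {..<K} d (\<lambda>_. U)) (\<lambda>S. H (X S) (S k))
      = measure_pmf.expectation (pair_pmf U Q) (\<lambda>p. H (X (snd p)) (fst p))"
    unfolding M by (simp add: case_prod_beta Xdep)
  also have "\<dots> = measure_pmf.expectation U (\<lambda>y. measure_pmf.expectation Q (\<lambda>f. H (X f) y))"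
    by (subst exp_pair[OF U Qf]) simp
  also have "\<dots> = measure_pmf.expectation Q (\<lambda>f. measure_pmf.expectation U (\<lambda>y. H (X f) y))"
    by (rule exp_swap[OF U Qf])
  also have "\<dots> = measure_pmf.expectation (pair_pmf U Q) (\<lambda>p. measure_pmf.expectation U (\<lambda>T. H (X (snd p)) T))"
    by (subst exp_pair[OF U Qf]) simp
  also have "\<dots> = measure_pmf.expectation (Pi_pmf {..<K} d (\<lambda>_. U)) (\<lambda>S. measure_pmf.expectation U (\<lambda>T. H (X S) T))"
    unfolding M by (simp add: case_prod_beta Xdep)
  finally show ?thesis .
qed



lemma batches_finite: "finite (batches n B)"
  unfolding batches_def by (rule finite_subset[of _ "Pow {..<n}"]) auto

lemma batches_card: "card (batches n B) = n choose B"
  unfolding batches_def using n_subsets[of "{..<n}" B] by simp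

lemma batches_ne: "B \<le> n \<Longrightarrow> batches n B \<noteq> {}"
proof -
  assume "B \<le> n"
  then have "{..<B} \<in> batches n B" unfolding batches_def by auto
  then show ?thesis by blast
qed

lemma card_batches_with:
  assumes i: "i < n" and B: "1 \<le> B"
  shows "card {T \<in> batches n B. i \<in> T} = (n - 1) choose (B - 1)"
proof -
  have "{T \<in> batches n B. i \<in> T} = insert i ` {U. U \<subseteq> {..<n} - {i} \<and> card U = B - 1}"
  proof (intro equalityI subsetI)
    fix T assume "T \<in> {T \<in> batches n B. i \<in> T}"
    then have T: "T \<subseteq> {..<n}" "card T = B" "i \<in> T" by (auto simp: batches_def)
    have "finite T" using T(1) finite_subset by blast
    then have "T = insert i (T - {i})" "card (T - {i}) = B - 1" using T by auto
    then show "T \<in> insert i ` {U. U \<subseteq> {..<n} - {i} \<and> card U = B - 1}" using T by blast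
  next
    fix T assume "T \<in> insert i ` {U. U \<subseteq> {..<n} - {i} \<and> card U = B - 1}"
    then obtain U where U: "U \<subseteq> {..<n} - {i}" "card U = B - 1" "T = insert i U" by blast
    have "finite U" using U(1) finite_subset by blast
    then have "card T = B" using U B by (auto simp: card_insert_if)
    then show "T \<in> {T \<in> batches n B. i \<in> T}" using U i by (auto simp: batches_def)
  qed
  moreover have "inj_on (insert i) {U. U \<subseteq> {..<n} - {i} \<and> card U = B - 1}"
    by (rule inj_onI) blast
  ultimately have "card {T \<in> batches n B. i \<in> T} = card {U. U \<subseteq> {..<n} - {i} \<and> card U = B - 1}"
    by (simp add: card_image)
  also have "\<dots> = card ({..<n} - {i}) choose (B - 1)" by (rule n_subsets) simp
  also have "card ({..<n} - {i}) = n - 1" using i by simp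
  finally show ?thesis .
qed

lemma batch_avg:
  assumes B: "1 \<le> B" "B \<le> n"
  shows "measure_pmf.expectation (pmf_of_set (batches n B)) (\<lambda>T. batch_fun f T y) = avg_fun n f y"
proof -
  have n: "n \<ge> 1" using B by simp
  have eq1: "(\<Sum>T\<in>batches n B. batch_fun f T y) = (1 / real B) * (\<Sum>T\<in>batches n B. \<Sum>i<n. if i \<in> T then f i y else 0)"
    unfolding batch_fun_def
    by (auto simp: sum_distrib_left batches_def sum.If_cases Int_absorb1 intro!: sum.cong)
  also have "\<dots> = (1 / real B) * (\<Sum>i<n. f i y * real (card {T \<in> batches n B. i \<in> T}))"
    by (subst sum.swap) (simp add: sum.If_cases batches_finite mult.commute Int_def)
  also have "\<dots> = (1 / real B) * (real ((n - 1) choose (B - 1)) * (\<Sum>i<n. f i y))"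
    using card_batches_with[OF _ B(1), of _ n] by (simp add: sum_distrib_left sum_distrib_right mult.commute)
  finally have eq1: "(\<Sum>T\<in>batches n B. batch_fun f T y) = (1 / real B) * (real ((n - 1) choose (B - 1)) * (\<Sum>i<n. f i y))" .
  have bin: "real B * real (n choose B) = real n * real ((n - 1) choose (B - 1))"
    using times_binomial_minus1_eq[of B n] B by (metis of_nat_mult not_one_le_zero neq0_conv)
  have pos: "real (n choose B) > 0" using B by simp
  show ?thesis
    using batches_finite[of n B] batches_ne[of B n] B
    apply (simp add: integral_pmf_of_set eq1 batches_card avg_fun_def)
    using bin pos n by (simp add: field_simps)
qed



lemma norm_diff_sq:
  fixes a b :: "'a::real_inner"
  shows "(norm (a - b))\<^sup>2 = (norm a)\<^sup>2 - 2 * (a \<bullet> b) + (norm b)\<^sup>2"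
  unfolding power2_norm_eq_inner by (simp add: inner_diff_left inner_diff_right inner_commute[of b a])

lemma step_lemma:
  fixes \<phi> :: "'a::real_inner \<Rightarrow> real" and g :: "'a \<Rightarrow> 'a"
  assumes d: "\<And>z. (\<phi> has_derivative (\<lambda>h. g z \<bullet> h)) (at z)"
   and cv: "convex_on UNIV \<phi>"
   and lip: "\<And>u v. norm (g u - g v) \<le> L * norm (u - v)"
   and Lpos: "L > 0"
   and bdd: "bdd_below (range \<phi>)"
   and ls: "ls \<le> (INF x. \<phi> x)"
   and c1: "1 \<le> cp" "cp \<le> ck"
   and gp: "1 / (2 * L) \<le> cp * gp"
   and gam_def: "gam = (if g x = 0 then cp * gp / ck else (1 / ck) * min ((\<phi> x - ls) / (norm (g x))\<^sup>2) (cp * gp))"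
   and x'_def: "x' = (if g x = 0 then x else x - gam *\<^sub>R g x)"
  shows "1 / (2 * L) \<le> ck * gam" "gam \<le> gp" "0 < gam"
    "(2 - 1 / ck) * (\<phi> x - \<phi> xs) \<le> ((norm (x - xs))\<^sup>2 - (norm (x' - xs))\<^sup>2) / gam + (\<phi> xs - ls) / ck"
proof -
  have lsz: "ls \<le> \<phi> z" for z
    using ls cINF_lower[OF bdd, of z] by simp
  have L2: "1 / (2 * L) > 0" using Lpos by simp
  have gppos: "gp > 0"
  proof -
    have "cp * gp > 0" using gp L2 by linarith
    then show ?thesis using c1 by (simp add: zero_less_mult_iff)
  qed
  have ckpos: "ck > 0" using c1 by simp
  have tang: "\<phi> x + g x \<bullet> (xs - x) \<le> \<phi> xs" by (rule convex_grad_ineq[OF cv d])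
  have A: "1 / (2 * L) \<le> ck * gam \<and> gam \<le> gp \<and> 0 < gam \<and>
    (2 - 1 / ck) * (\<phi> x - \<phi> xs) \<le> ((norm (x - xs))\<^sup>2 - (norm (x' - xs))\<^sup>2) / gam + (\<phi> xs - ls) / ck"
  proof (cases "g x = 0")
    case True
    then have gam: "gam = cp * gp / ck" and x': "x' = x" using gam_def x'_def by auto
    have 1: "ck * gam = cp * gp" using gam ckpos by simp
    have "cp * gp \<le> gp * ck" using c1 gppos by (simp add: mult_left_mono mult.commute[of cp])
    then have 2: "gam \<le> gp" unfolding gam by (simp add: pos_divide_le_eq[OF ckpos])
    have "ck * gam > 0" using 1 gp L2 by linarith
    then have 3: "gam > 0" using ckpos zero_less_mult_pos by blast
    have "\<phi> x \<le> \<phi> xs" using tang True by simp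
    moreover have "2 - 1 / ck \<ge> 0" using c1 by (simp add: divide_le_eq)
    ultimately have "(2 - 1 / ck) * (\<phi> x - \<phi> xs) \<le> 0" by (simp add: mult_nonneg_nonpos)
    moreover have "(\<phi> xs - ls) / ck \<ge> 0" using lsz[of xs] ckpos by simp
    ultimately show ?thesis using 1 2 3 gp x' by simp
  next
    case False
    define v where "v = g x"
    define P where "P = (\<phi> x - ls) / (norm v)\<^sup>2"
    have vn: "(norm v)\<^sup>2 > 0" using False v_def by simp
    have gam: "gam = (1 / ck) * min P (cp * gp)" and x': "x' = x - gam *\<^sub>R v"
      using gam_def x'_def False by (auto simp: v_def P_def)
    have desc: "\<phi> (x - (1 / L) *\<^sub>R v) \<le> \<phi> x + g x \<bullet> ((x - (1 / L) *\<^sub>R v) - x) + L / 2 * (norm ((x - (1 / L) *\<^sub>R v) - x))\<^sup>2"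
      by (rule descent_ineq[OF d lip])
    also have "\<dots> = \<phi> x - (norm v)\<^sup>2 / (2 * L)"
      using Lpos by (simp add: v_def inner_diff_right power2_eq_square dot_square_norm field_simps)
    finally have "ls \<le> \<phi> x - (norm v)\<^sup>2 / (2 * L)" using lsz[of "x - (1 / L) *\<^sub>R v"] by linarith
    then have "(norm v)\<^sup>2 / (2 * L) \<le> \<phi> x - ls" by simp
    then have Pge: "1 / (2 * L) \<le> P" unfolding P_def using vn by (simp add: le_divide_eq)
    have 1: "ck * gam = min P (cp * gp)" using gam ckpos by simp
    have h1b: "1 / (2 * L) \<le> ck * gam" using 1 Pge gp by simp
    have "ck * gam > 0" using h1b L2 by linarith
    then have 3: "gam > 0" using ckpos zero_less_mult_pos by blast
    have "ck * gam \<le> cp * gp" using 1 by simp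
    also have "\<dots> \<le> ck * gp" using c1 gppos by (simp add: mult_right_mono)
    finally have 2: "gam \<le> gp" using ckpos by simp
    have gP: "ck * gam \<le> P" using 1 by simp
    have sq: "gam\<^sup>2 * (norm v)\<^sup>2 \<le> gam * (\<phi> x - ls) / ck"
    proof -
      have "gam * (norm v)\<^sup>2 \<le> P / ck * (norm v)\<^sup>2" using gP ckpos vn
        by (intro mult_right_mono) (auto simp: field_simps)
      also have "\<dots> = (\<phi> x - ls) / ck" unfolding P_def using vn by simp
      finally have "gam * (gam * (norm v)\<^sup>2) \<le> gam * ((\<phi> x - ls) / ck)" using 3 by (intro mult_left_mono) auto
      then show ?thesis by (simp add: power2_eq_square mult.assoc)
    qed
    have expand: "(norm (x' - xs))\<^sup>2 = (norm (x - xs))\<^sup>2 - 2 * gam * (v \<bullet> (x - xs)) + gam\<^sup>2 * (norm v)\<^sup>2"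
    proof -
      have e: "x' - xs = (x - xs) - gam *\<^sub>R v" using x' by simp
      have "(norm ((x - xs) - gam *\<^sub>R v))\<^sup>2 = (norm (x - xs))\<^sup>2 - 2 * ((x - xs) \<bullet> (gam *\<^sub>R v)) + (norm (gam *\<^sub>R v))\<^sup>2"
        by (rule norm_diff_sq)
      also have "(x - xs) \<bullet> (gam *\<^sub>R v) = gam * (v \<bullet> (x - xs))" by (simp add: inner_commute)
      also have "(norm (gam *\<^sub>R v))\<^sup>2 = gam\<^sup>2 * (norm v)\<^sup>2" by (simp add: power_mult_distrib)
      finally show ?thesis unfolding e by (simp add: mult.assoc)
    qed
    have cvx: "v \<bullet> (x - xs) \<ge> \<phi> x - \<phi> xs" using tang by (simp add: v_def inner_diff_right)
    have "gam * ((2 - 1 / ck) * (\<phi> x - \<phi> xs) - (\<phi> xs - ls) / ck) = 2 * gam * (\<phi> x - \<phi> xs) - gam * (\<phi> x - ls) / ck"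
      by (simp add: algebra_simps diff_divide_distrib)
    also have "\<dots> \<le> 2 * gam * (v \<bullet> (x - xs)) - gam\<^sup>2 * (norm v)\<^sup>2"
      using cvx sq 3 by (smt (verit) mult_left_mono)
    also have "\<dots> = (norm (x - xs))\<^sup>2 - (norm (x' - xs))\<^sup>2" using expand by simp
    finally have "(2 - 1 / ck) * (\<phi> x - \<phi> xs) - (\<phi> xs - ls) / ck \<le> ((norm (x - xs))\<^sup>2 - (norm (x' - xs))\<^sup>2) / gam"
      using 3 by (simp add: le_divide_eq mult.commute)
    then show ?thesis using h1b 2 3 by simp
  qed
  then show "1 / (2 * L) \<le> ck * gam" "gam \<le> gp" "0 < gam"
    "(2 - 1 / ck) * (\<phi> x - \<phi> xs) \<le> ((norm (x - xs))\<^sup>2 - (norm (x' - xs))\<^sup>2) / gam + (\<phi> xs - ls) / ck"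
    by auto
qed




lemma convex_scaled_sum:
  fixes f :: "nat \<Rightarrow> 'a::real_vector \<Rightarrow> real"
  assumes cv: "\<And>i. i \<in> I \<Longrightarrow> convex_on UNIV (f i)" and a: "a \<ge> 0"
  shows "convex_on UNIV (\<lambda>x. a * (\<Sum>i\<in>I. f i x))"
proof (rule convex_onI)
  fix t :: real and x y :: 'a assume t: "0 < t" "t < 1"
  have "(\<Sum>i\<in>I. f i ((1 - t) *\<^sub>R x + t *\<^sub>R y)) \<le> (\<Sum>i\<in>I. (1 - t) * f i x + t * f i y)"
    using cv t by (intro sum_mono) (auto simp: convex_on_def)
  also have "\<dots> = (1 - t) * (\<Sum>i\<in>I. f i x) + t * (\<Sum>i\<in>I. f i y)"
    by (simp add: sum.distrib sum_distrib_left)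
  finally show "a * (\<Sum>i\<in>I. f i ((1 - t) *\<^sub>R x + t *\<^sub>R y)) \<le> (1 - t) * (a * (\<Sum>i\<in>I. f i x)) + t * (a * (\<Sum>i\<in>I. f i y))"
    using a by (simp add: mult_left_mono algebra_simps) (metis (no_types, lifting) mult_left_mono distrib_left mult.left_commute a)
qed simp

lemma batch_props:
  fixes f :: "nat \<Rightarrow> 'a::real_inner \<Rightarrow> real" and grad :: "nat \<Rightarrow> 'a \<Rightarrow> 'a"
  assumes T: "T \<subseteq> {..<n}" "card T \<ge> 1"
    and deriv: "\<And>i x. i < n \<Longrightarrow> (f i has_derivative (\<lambda>h. grad i x \<bullet> h)) (at x)"
    and convex: "\<And>i. i < n \<Longrightarrow> convex_on UNIV (f i)"
    and smooth: "\<And>i x y. i < n \<Longrightarrow> norm (grad i x - grad i y) \<le> L i * norm (x - y)"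
    and lower_bdd: "\<And>i. i < n \<Longrightarrow> bdd_below (range (f i))"
    and Lt: "\<And>i. i < n \<Longrightarrow> L i \<le> Lt"
  shows "\<And>z. (batch_fun f T has_derivative (\<lambda>h. batch_grad grad T z \<bullet> h)) (at z)"
    "convex_on UNIV (batch_fun f T)"
    "\<And>u v. norm (batch_grad grad T u - batch_grad grad T v) \<le> Lt * norm (u - v)"
    "bdd_below (range (batch_fun f T))"
proof -
  have fin: "finite T" using T(1) finite_subset by blast
  have Bpos: "real (card T) > 0" using T by simp
  show "(batch_fun f T has_derivative (\<lambda>h. batch_grad grad T z \<bullet> h)) (at z)" for z
  proof -
    have "((\<lambda>x. (1 / real (card T)) * (\<Sum>i\<in>T. f i x)) has_derivative (\<lambda>h. (1 / real (card T)) * (\<Sum>i\<in>T. grad i z \<bullet> h))) (at z)"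
      using T(1) by (intro has_derivative_mult_right has_derivative_sum) (auto intro!: deriv)
    moreover have "(\<lambda>h. (1 / real (card T)) * (\<Sum>i\<in>T. grad i z \<bullet> h)) = (\<lambda>h. batch_grad grad T z \<bullet> h)"
      by (auto simp: fun_eq_iff batch_grad_def inner_sum_left)
    ultimately show ?thesis by (simp add: batch_fun_def[abs_def])
  qed
  show "convex_on UNIV (batch_fun f T)"
    unfolding batch_fun_def[abs_def] using T(1) by (intro convex_scaled_sum convex) auto
  show "norm (batch_grad grad T u - batch_grad grad T v) \<le> Lt * norm (u - v)" for u v
  proof -
    have "batch_grad grad T u - batch_grad grad T v = (1 / real (card T)) *\<^sub>R (\<Sum>i\<in>T. grad i u - grad i v)"
      by (simp add: batch_grad_def sum_subtractf scaleR_diff_right)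
    then have "norm (batch_grad grad T u - batch_grad grad T v) = (1 / real (card T)) * norm (\<Sum>i\<in>T. grad i u - grad i v)"
      by simp
    also have "\<dots> \<le> (1 / real (card T)) * (\<Sum>i\<in>T. Lt * norm (u - v))"
    proof (intro mult_left_mono order.trans[OF norm_sum] sum_mono)
      fix i assume "i \<in> T"
      then have i: "i < n" using T by auto
      have "L i * norm (u - v) \<le> Lt * norm (u - v)" using Lt[OF i] by (simp add: mult_right_mono)
      then show "norm (grad i u - grad i v) \<le> Lt * norm (u - v)" using smooth[OF i, of u v] by linarith
    qed simp
    also have "\<dots> = Lt * norm (u - v)" using Bpos by simp
    finally show ?thesis .
  qed
  show "bdd_below (range (batch_fun f T))"
  proof -
    have "\<forall>i\<in>T. \<exists>m. \<forall>x. m \<le> f i x" using lower_bdd T(1) by (auto simp: bdd_below_def)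
    then obtain m where m: "\<And>i x. i \<in> T \<Longrightarrow> m i \<le> f i x" by metis
    have "(1 / real (card T)) * (\<Sum>i\<in>T. m i) \<le> batch_fun f T x" for x
      unfolding batch_fun_def using Bpos by (intro mult_left_mono sum_mono m) auto
    then show ?thesis by (auto simp: bdd_below_def)
  qed
qed

lemma telescope:
  fixes r \<gamma> :: "nat \<Rightarrow> real"
  assumes "m \<ge> 1" "\<And>k. k < m \<Longrightarrow> r k \<le> D" "\<And>k. Suc k < m \<Longrightarrow> \<gamma> (Suc k) \<le> \<gamma> k"
    "\<And>k. k < m \<Longrightarrow> \<gamma> k > 0"
  shows "(\<Sum>k<m. (r k - r (Suc k)) / \<gamma> k) \<le> (D - r m) / \<gamma> (m - 1)"
  using assms
proof (induction m rule: nat_induct_at_least)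
  case base
  then show ?case by (simp add: divide_right_mono diff_divide_distrib)
next
  case (Suc m)
  have IH: "(\<Sum>k<m. (r k - r (Suc k)) / \<gamma> k) \<le> (D - r m) / \<gamma> (m - 1)"
    using Suc by auto
  have "\<gamma> (Suc (m - 1)) \<le> \<gamma> (m - 1)" using Suc.prems(2)[of "m - 1"] Suc.hyps by simp
  then have g: "\<gamma> m \<le> \<gamma> (m - 1)" "\<gamma> m > 0" using Suc.prems(3)[of m] Suc.hyps by auto
  have "(D - r m) / \<gamma> (m - 1) \<le> (D - r m) / \<gamma> m"
    using g Suc.prems(1)[of m] by (intro divide_left_mono) auto
  then show ?case using IH by (simp add: diff_divide_distrib)
qed




lemma st_dep:
  "(\<And>j. j < k \<Longrightarrow> S j = S' j) \<Longrightarrow> sgd_decsps f g ls c gb x0 S k = sgd_decsps f g ls c gb x0 S' k"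
proof (induction k)
  case (Suc k)
  have e: "S k = S' k" using Suc.prems by simp
  have ih: "sgd_decsps f g ls c gb x0 S k = sgd_decsps f g ls c gb x0 S' k" using Suc.IH Suc.prems by simp
  show ?case by (simp only: sgd_decsps.simps ih e)
qed simp

theorem theorem3:
  fixes f :: "nat \<Rightarrow> 'a::euclidean_space \<Rightarrow> real"
    and grad :: "nat \<Rightarrow> 'a \<Rightarrow> 'a"
    and L :: "nat \<Rightarrow> real"
    and n B K :: nat
    and lstar :: "nat set \<Rightarrow> real"
    and c :: "nat \<Rightarrow> real"
    and gb :: real
    and x0 xs :: 'a
  assumes n_pos: "n \<ge> 1"
    and B_range: "1 \<le> B" "B \<le> n"
    and deriv: "\<And>i x. i < n \<Longrightarrow> (f i has_derivative (\<lambda>h. grad i x \<bullet> h)) (at x)"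
    and convex: "\<And>i. i < n \<Longrightarrow> convex_on UNIV (f i)"
    and smooth: "\<And>i x y. i < n \<Longrightarrow> norm (grad i x - grad i y) \<le> L i * norm (x - y)"
    and lower_bdd: "\<And>i. i < n \<Longrightarrow> bdd_below (range (f i))"
    and minimizer: "\<And>x. avg_fun n f xs \<le> avg_fun n f x"
    and lstar_le: "\<And>S. S \<in> batches n B \<Longrightarrow> lstar S \<le> (INF x. batch_fun f S x)"
    and c_mono: "mono c"
    and c_ge1: "\<And>k. c k \<ge> 1"
    and gb_pos: "gb > 0"
    and K_pos: "K \<ge> 1"
  shows
    "let M = Pi_pmf {..<K} {} (\<lambda>_. pmf_of_set (batches n B));
         X = (\<lambda>S k. fst (sgd_decsps f grad lstar c gb x0 S k));
         xbar = (\<lambda>S. (1 / real K) *\<^sub>R (\<Sum>k<K. X S k));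
         D2 = (\<lambda>S. Max ((\<lambda>k. (norm (X S k - xs))\<^sup>2) ` {..<K}));
         Lt = max (Max (L ` {..<n})) (1 / (2 * c 0 * gb));
         sigma2 = avg_fun n f xs - measure_pmf.expectation (pmf_of_set (batches n B)) lstar
     in measure_pmf.expectation M (\<lambda>S. avg_fun n f (xbar S) - avg_fun n f xs)
        \<le> 2 * c (K - 1) * Lt * measure_pmf.expectation M D2 / real K
           + (1 / real K) * (\<Sum>k<K. sigma2 / c k)"
proof -
  define U where "U = pmf_of_set (batches n B)"
  define M where "M = Pi_pmf {..<K} {} (\<lambda>_. U)"
  define st where "st S k = sgd_decsps f grad lstar c gb x0 S k" for S k
  define X where "X S k = fst (st S k)" for S k
  define G where "G S k = snd (st S k)" for S k
  define F where "F = avg_fun n f"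
  define Lt where "Lt = max (Max (L ` {..<n})) (1 / (2 * c 0 * gb))"
  define sigma2 where "sigma2 = F xs - measure_pmf.expectation U lstar"
  define D2 where "D2 S = Max ((\<lambda>k. (norm (X S k - xs))\<^sup>2) ` {..<K})" for S
  define xbar where "xbar S = (1 / real K) *\<^sub>R (\<Sum>k<K. X S k)" for S
  define \<sigma> where "\<sigma> T = batch_fun f T xs - lstar T" for T
  define Fb where "Fb T = batch_fun f T" for T
  define gB where "gB T = batch_grad grad T" for T
  have c0: "c 0 \<ge> 1" by (rule c_ge1)
  have Lt_ge: "1 / (2 * c 0 * gb) \<le> Lt" unfolding Lt_def by simp
  have Ltpos: "Lt > 0" using Lt_ge c0 gb_pos by (smt (verit) divide_pos_pos mult_pos_pos)
  have LLt: "L i \<le> Lt" if "i < n" for i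
    unfolding Lt_def using that by (intro order.trans[OF Max_ge max.cobounded1]) auto
  have batches_fin: "finite (batches n B)" by (rule batches_finite)
  have batches_ne': "batches n B \<noteq> {}" by (rule batches_ne[OF B_range(2)])
  have setU: "set_pmf U = batches n B" unfolding U_def using batches_fin batches_ne' by simp
  have Ufin: "finite (set_pmf U)" using setU batches_fin by simp
  have setM: "set_pmf M = PiE_dflt {..<K} {} (\<lambda>_. batches n B)"
    unfolding M_def by (subst set_Pi_pmf) (auto simp: setU o_def)
  have Mfin: "finite (set_pmf M)" unfolding setM using batches_fin by (intro finite_PiE_dflt) auto
  have MS: "S k \<in> batches n B" if "S \<in> set_pmf M" "k < K" for S k
    using that unfolding setM PiE_dflt_def by auto
  have intM: "integrable M h" for h :: "_ \<Rightarrow> real" by (rule integrable_measure_pmf_finite[OF Mfin])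
  have intU: "integrable U h" for h :: "_ \<Rightarrow> real" by (rule integrable_measure_pmf_finite[OF Ufin])
  have bp: "\<And>z. (Fb T has_derivative (\<lambda>h. gB T z \<bullet> h)) (at z)"
    "convex_on UNIV (Fb T)"
    "\<And>u v. norm (gB T u - gB T v) \<le> Lt * norm (u - v)"
    "bdd_below (range (Fb T))" if "T \<in> batches n B" for T
    using batch_props[of T n f grad L Lt, OF _ _ deriv convex smooth lower_bdd LLt] that B_range
    unfolding Fb_def gB_def batches_def by auto
  have rec: "X S (Suc k) = (if gB (S k) (X S k) = 0 then X S k else X S k - G S (Suc k) *\<^sub>R gB (S k) (X S k))"
    "G S (Suc k) = (if gB (S k) (X S k) = 0 then c (k - 1) * G S k / c k
       else (1 / c k) * min ((Fb (S k) (X S k) - lstar (S k)) / (norm (gB (S k) (X S k)))\<^sup>2) (c (k - 1) * G S k))"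
    for S k
    by (simp_all add: X_def G_def st_def Fb_def gB_def split_beta Let_def)
  have step: "1 / (2 * Lt) \<le> c k * G S (Suc k) \<and> G S (Suc k) \<le> G S k \<and> 0 < G S (Suc k) \<and>
    (2 - 1 / c k) * (Fb (S k) (X S k) - Fb (S k) xs) \<le> ((norm (X S k - xs))\<^sup>2 - (norm (X S (Suc k) - xs))\<^sup>2) / G S (Suc k) + (Fb (S k) xs - lstar (S k)) / c k"
    if S: "S \<in> set_pmf M" and k: "k < K" and inv: "1 / (2 * Lt) \<le> c (k - 1) * G S k" for S k
  proof -
    have T: "S k \<in> batches n B" by (rule MS[OF S k])
    have cm: "c (k - 1) \<le> c k" using c_mono by (simp add: monoD)
    note sl = step_lemma[OF bp(1)[OF T] bp(2)[OF T] bp(3)[OF T] Ltpos bp(4)[OF T] lstar_le[OF T, folded Fb_def]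
      c_ge1 cm inv rec(2) rec(1)]
    show ?thesis using sl by auto
  qed
  have inv: "1 / (2 * Lt) \<le> c (k - 1) * G S k" if S: "S \<in> set_pmf M" and "k \<le> K" for S k
    using \<open>k \<le> K\<close>
  proof (induction k)
    case 0
    have "G S 0 = gb" by (simp add: G_def st_def)
    moreover have "1 / (2 * Lt) \<le> c 0 * gb"
      using Lt_ge Ltpos c0 gb_pos by (simp add: field_simps)
    ultimately show ?case by simp
  next
    case (Suc k)
    then show ?case using step[OF S, of k] by simp
  qed
  define r where "r S k = (norm (X S k - xs))\<^sup>2" for S k
  define \<Delta> where "\<Delta> S = (\<Sum>k<K. (2 - 1 / c k) * (Fb (S k) (X S k) - Fb (S k) xs))" for S
  define E where "E = (\<lambda>h :: (nat \<Rightarrow> nat set) \<Rightarrow> real. measure_pmf.expectation M h)"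
  have Xdep: "X (S(k:=y)) k = X S k" for S k y
    unfolding X_def st_def by (subst st_dep[of k "S(k:=y)" S]) auto
  have D2ge: "r S k \<le> D2 S" if "k < K" for S k
    unfolding D2_def r_def using that by (intro Max_ge) auto
  have D2nn: "D2 S \<ge> 0" for S
  proof -
    have "0 < K" using K_pos by simp
    then have "r S 0 \<le> D2 S" by (rule D2ge)
    moreover have "0 \<le> r S 0" unfolding r_def by simp
    ultimately show ?thesis by linarith
  qed
  have path: "\<Delta> S \<le> 2 * c (K - 1) * Lt * D2 S + (\<Sum>k<K. \<sigma> (S k) / c k)" if S: "S \<in> set_pmf M" for S
  proof -
    have stp: "1 / (2 * Lt) \<le> c k * G S (Suc k) \<and> G S (Suc k) \<le> G S k \<and> 0 < G S (Suc k) \<and>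
      (2 - 1 / c k) * (Fb (S k) (X S k) - Fb (S k) xs) \<le> (r S k - r S (Suc k)) / G S (Suc k) + \<sigma> (S k) / c k"
      if "k < K" for k
    proof -
      have "k \<le> K" using that by simp
      note h = step[OF S that inv[OF S this]]
      have sg: "\<sigma> (S k) = Fb (S k) xs - lstar (S k)" unfolding \<sigma>_def Fb_def by simp
      show ?thesis unfolding r_def sg using h by blast
    qed
    have GK: "G S K > 0"
    proof -
      have "K - 1 < K" "Suc (K - 1) = K" using K_pos by auto
      then show ?thesis using stp[of "K - 1"] by simp
    qed
    have "\<Delta> S \<le> (\<Sum>k<K. (r S k - r S (Suc k)) / G S (Suc k) + \<sigma> (S k) / c k)"
      unfolding \<Delta>_def by (intro sum_mono) (use stp in blast)
    also have "\<dots> = (\<Sum>k<K. (r S k - r S (Suc k)) / G S (Suc k)) + (\<Sum>k<K. \<sigma> (S k) / c k)"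
      by (simp add: sum.distrib)
    finally have t0: "\<Delta> S \<le> (\<Sum>k<K. (r S k - r S (Suc k)) / G S (Suc k)) + (\<Sum>k<K. \<sigma> (S k) / c k)" .
    have tel: "(\<Sum>k<K. (r S k - r S (Suc k)) / G S (Suc k)) \<le> (D2 S - r S K) / G S (Suc (K - 1))"
    proof (rule telescope[of K "r S" "D2 S" "\<lambda>k. G S (Suc k)"])
      show "1 \<le> K" by (rule K_pos)
      show "r S k \<le> D2 S" if "k < K" for k using D2ge that .
      show "G S (Suc (Suc k)) \<le> G S (Suc k)" if "Suc k < K" for k using stp[OF that] by blast
      show "0 < G S (Suc k)" if "k < K" for k using stp[OF that] by blast
    qed
    have KK: "Suc (K - 1) = K" using K_pos by simp
    have t1: "(\<Sum>k<K. (r S k - r S (Suc k)) / G S (Suc k)) \<le> (D2 S - r S K) / G S K"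
      using tel unfolding KK .
    have t2: "(D2 S - r S K) / G S K \<le> D2 S / G S K"
    proof -
      have "G S K > 0" by (rule GK)
      moreover have "r S K \<ge> 0" unfolding r_def by simp
      ultimately show ?thesis by - (rule divide_right_mono, auto)
    qed
    have t3: "D2 S / G S K \<le> 2 * c (K - 1) * Lt * D2 S"
    proof -
      have Gp: "G S K > 0" by (rule GK)
      have L2p: "2 * Lt > 0" using Ltpos by simp
      have "1 / (2 * Lt) \<le> c (K - 1) * G S K" using inv[OF S, of K] by simp
      then have a: "1 \<le> (c (K - 1) * G S K) * (2 * Lt)" by (rule pos_divide_le_eq[OF L2p, THEN iffD1])
      have b: "(2 * c (K - 1) * Lt) * G S K = (c (K - 1) * G S K) * (2 * Lt)" by (simp add: algebra_simps)
      have "1 \<le> (2 * c (K - 1) * Lt) * G S K" by (subst b) (rule a)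
      then have "1 / G S K \<le> 2 * c (K - 1) * Lt" by (rule pos_divide_le_eq[OF Gp, THEN iffD2])
      then have m: "D2 S * (1 / G S K) \<le> D2 S * (2 * c (K - 1) * Lt)" using D2nn[of S] by (rule mult_left_mono)
      have "D2 S / G S K = D2 S * (1 / G S K)" by simp
      also have "\<dots> \<le> D2 S * (2 * c (K - 1) * Lt)" by (rule m)
      also have "\<dots> = 2 * c (K - 1) * Lt * D2 S" by (simp only: mult.commute)
      finally show ?thesis .
    qed
    show ?thesis using t0 t1 t2 t3 by linarith
  qed
  have cF: "convex_on UNIV F"
    unfolding F_def avg_fun_def[abs_def] by (intro convex_scaled_sum convex) auto
  have jen: "real K * (F (xbar S) - F xs) \<le> (\<Sum>k<K. (2 - 1 / c k) * (F (X S k) - F xs))" for S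
  proof -
    have "F (xbar S) = F (\<Sum>k<K. (1 / real K) *\<^sub>R X S k)" unfolding xbar_def by (simp add: scaleR_sum_right)
    also have "\<dots> \<le> (\<Sum>k<K. (1 / real K) * F (X S k))"
    proof -
      have "0 \<in> {..<K}" using K_pos by simp
      then have "{..<K} \<noteq> {}" by blast
      then show ?thesis using K_pos by (intro convex_on_sum[OF _ _ cF]) auto
    qed
    also have "\<dots> = (1 / real K) * (\<Sum>k<K. F (X S k))" by (simp add: sum_distrib_left)
    finally have h: "F (xbar S) \<le> (1 / real K) * (\<Sum>k<K. F (X S k))" .
    have "real K * F (xbar S) \<le> real K * ((1 / real K) * (\<Sum>k<K. F (X S k)))"
      using h by (rule mult_left_mono) simp
    then have "real K * F (xbar S) \<le> (\<Sum>k<K. F (X S k))" using K_pos by simp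
    then have "real K * (F (xbar S) - F xs) \<le> (\<Sum>k<K. F (X S k) - F xs)"
      by (simp add: sum_subtractf algebra_simps)
    also have "\<dots> \<le> (\<Sum>k<K. (2 - 1 / c k) * (F (X S k) - F xs))"
    proof (intro sum_mono)
      fix k
      have "F (X S k) - F xs \<ge> 0" using minimizer unfolding F_def by simp
      moreover have "1 \<le> 2 - 1 / c k" using c_ge1[of k] by (simp add: divide_le_eq)
      ultimately show "F (X S k) - F xs \<le> (2 - 1 / c k) * (F (X S k) - F xs)"
        using mult_right_mono[of 1 "2 - 1 / c k" "F (X S k) - F xs"] by simp
    qed
    finally show ?thesis .
  qed
  have EUF: "measure_pmf.expectation U (\<lambda>T. Fb T y) = F y" for y
    unfolding U_def Fb_def F_def by (rule batch_avg[OF B_range])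
  have EFb: "E (\<lambda>S. Fb (S k) (X S k)) = E (\<lambda>S. F (X S k))" if "k < K" for k
    unfolding E_def M_def using indep_step[OF that Ufin, where X="\<lambda>S. X S k" and H="\<lambda>y T. Fb T y" and d="{}"] Xdep
    by (simp add: EUF)
  have EFbxs: "E (\<lambda>S. Fb (S k) xs) = F xs" if "k < K" for k
    unfolding E_def M_def using indep_step[OF that Ufin, where X="\<lambda>S. xs" and H="\<lambda>y T. Fb T y" and d="{}"]
    by (simp add: EUF)
  have Esig: "E (\<lambda>S. \<sigma> (S k)) = sigma2" if "k < K" for k
  proof -
    have "E (\<lambda>S. \<sigma> (S k)) = measure_pmf.expectation U \<sigma>"
      unfolding E_def M_def using indep_step[OF that Ufin, where X="\<lambda>S. xs" and H="\<lambda>y T. \<sigma> T" and d="{}"]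
      by simp
    also have "\<dots> = measure_pmf.expectation U (\<lambda>T. Fb T xs) - measure_pmf.expectation U lstar"
      unfolding \<sigma>_def Fb_def by (rule Bochner_Integration.integral_diff[OF intU intU])
    finally show ?thesis unfolding sigma2_def EUF .
  qed
  have Econst: "E (\<lambda>S. a) = a" for a :: real unfolding E_def by simp
  have lin: "E (\<lambda>S. \<Sum>k<K. a k * (P S k - Q S k)) = (\<Sum>k<K. a k * (E (\<lambda>S. P S k) - E (\<lambda>S. Q S k)))"
    for a :: "nat \<Rightarrow> real" and P Q :: "(nat \<Rightarrow> nat set) \<Rightarrow> nat \<Rightarrow> real"
    unfolding E_def by (subst Bochner_Integration.integral_sum) (simp_all add: intM Bochner_Integration.integral_diff[OF intM intM])
  have "real K * E (\<lambda>S. F (xbar S) - F xs) = E (\<lambda>S. real K * (F (xbar S) - F xs))"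
    unfolding E_def by simp
  also have "\<dots> \<le> E (\<lambda>S. \<Sum>k<K. (2 - 1 / c k) * (F (X S k) - F xs))"
    unfolding E_def by (rule Bochner_Integration.integral_mono[OF intM intM jen])
  also have "\<dots> = (\<Sum>k<K. (2 - 1 / c k) * (E (\<lambda>S. F (X S k)) - E (\<lambda>S. F xs)))"
    by (rule lin)
  also have "\<dots> = (\<Sum>k<K. (2 - 1 / c k) * (E (\<lambda>S. Fb (S k) (X S k)) - E (\<lambda>S. Fb (S k) xs)))"
    by (intro sum.cong refl) (simp add: EFb EFbxs Econst)
  also have "\<dots> = E \<Delta>"
    unfolding \<Delta>_def by (rule lin[symmetric])
  also have "\<dots> \<le> E (\<lambda>S. 2 * c (K - 1) * Lt * D2 S + (\<Sum>k<K. \<sigma> (S k) / c k))"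
    unfolding E_def by (rule integral_mono_AE[OF intM intM]) (unfold AE_measure_pmf_iff, use path in blast)
  also have "\<dots> = 2 * c (K - 1) * Lt * E D2 + (\<Sum>k<K. E (\<lambda>S. \<sigma> (S k)) / c k)"
    unfolding E_def by (subst Bochner_Integration.integral_add[OF intM intM]) (simp add: Bochner_Integration.integral_sum intM)
  also have "\<dots> = 2 * c (K - 1) * Lt * E D2 + (\<Sum>k<K. sigma2 / c k)"
    by (simp add: Esig)
  finally have main: "real K * E (\<lambda>S. F (xbar S) - F xs) \<le> 2 * c (K - 1) * Lt * E D2 + (\<Sum>k<K. sigma2 / c k)" .
  have Kp: "real K > 0" using K_pos by simp
  have final: "E (\<lambda>S. F (xbar S) - F xs) \<le> 2 * c (K - 1) * Lt * E D2 / real K + (1 / real K) * (\<Sum>k<K. sigma2 / c k)"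
  proof -
    have "E (\<lambda>S. F (xbar S) - F xs) \<le> (2 * c (K - 1) * Lt * E D2 + (\<Sum>k<K. sigma2 / c k)) / real K"
      using main by (simp add: pos_le_divide_eq[OF Kp] mult.commute)
    then show ?thesis by (simp add: add_divide_distrib)
  qed
  show ?thesis
    using final unfolding Let_def E_def M_def U_def xbar_def D2_def X_def st_def Lt_def sigma2_def F_def
    by simp
qed

end
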